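(* For every complex number $s$ with $\operatorname{Re}(s)>2$, $$\sum_{n\ge1}\frac{\tau(n)\delta(n)}{n^s}=2\,\zeta(s-1)^2\,F(s-1).$$
   Context: The arithmetic derivative $\delta$ is defined by $\delta(p)=1$ for every prime $p$ and $\delta(mn)=m\delta(n)+n\delta(m)$ for all positive integers $m,n$; equivalently $\delta(1)=0$ and $\delta(n)=n\sum_{p^\alpha\| n}\alpha/p$. $\tau(n)$ is the number of positive divisors of $n$, $\zeta$ is the Riemann zeta function and $F(s)=\sum_{p\text{ prime}}\frac{1}{p^{s+1}-p}$. *)

theory Defs
  imports "HOL-Analysis.Analysis" "HOL-Computational_Algebra.Primes"
begin

text \<open>Arithmetic derivative: delta(n) = n * sum over p^a || n of a/p; delta(0) = 0 by convention
  (only n >= 1 is used).\<close>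
definition arith_deriv :: "nat \<Rightarrow> nat" where
  "arith_deriv n = (\<Sum>p\<in>prime_factors n. multiplicity p n * (n div p))"

definition divisor_count :: "nat \<Rightarrow> nat" where
  "divisor_count n = card {d. d dvd n \<and> d > 0}"

text \<open>Riemann zeta function, given by its Dirichlet series (used only for Re s > 1,
  where this is the usual definition).\<close>
definition riemann_zeta :: "complex \<Rightarrow> complex" where
  "riemann_zeta s = (\<Sum>n. 1 / (of_nat (Suc n) powr s))"

definition F_prime :: "complex \<Rightarrow> complex" where
  "F_prime s = (\<Sum>\<^sub>\<infinity>p\<in>{p::nat. prime p}. 1 / (of_nat p powr (s + 1) - of_nat p))"

end

theory Submission imports Defs begin

lemma cpowr_mult: "of_nat (a*b) powr (w::complex) = of_nat a powr w * of_nat b powr w"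
  by (simp add: powr_times_real)

lemma cpowr_pow: "(of_nat p powr (w::complex))^k = of_nat (p^k) powr w"
  by (induction k) (simp_all add: cpowr_mult del: of_nat_mult of_nat_power)

lemma norm_cpowr: "norm (of_nat n powr (w::complex)) = real n powr Re w"
  by (simp add: norm_powr_real_powr)

lemma has_sum_product_abs:
  fixes f g :: "_ \<Rightarrow> complex"
  assumes fa: "(f has_sum a) A" and gb: "(g has_sum b) B"
    and fs: "(\<lambda>x. norm (f x)) summable_on A" and gs: "(\<lambda>x. norm (g x)) summable_on B"
  shows "((\<lambda>(x,y). f x * g y) has_sum (a*b)) (A \<times> B)"
    and "(\<lambda>z. norm ((\<lambda>(x,y). f x * g y) z)) summable_on (A \<times> B)"
proof -
  have inner: "((\<lambda>y. norm (f x) * norm (g y)) has_sum (norm (f x) * infsum (\<lambda>y. norm (g y)) B)) B" for x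
    by (rule has_sum_cmult_right) (use gs in \<open>simp add: has_sum_infsum\<close>)
  have "(\<lambda>(x,y). norm (f x * g y)) summable_on Sigma A (\<lambda>_. B)"
    by (rule summable_on_SigmaI[where g="\<lambda>x. norm (f x) * infsum (\<lambda>y. norm (g y)) B"])
       (use inner fs in \<open>auto simp: norm_mult intro: summable_on_cmult_left\<close>)
  then show abs: "(\<lambda>z. norm ((\<lambda>(x,y). f x * g y) z)) summable_on (A \<times> B)"
    by (simp add: case_prod_unfold)
  show "((\<lambda>(x,y). f x * g y) has_sum (a*b)) (A \<times> B)"
  proof (rule has_sum_SigmaI[where g="\<lambda>x. f x * b"])
    show "((\<lambda>y. case (x, y) of (x, y) \<Rightarrow> f x * g y) has_sum f x * b) B" if "x \<in> A" for x
      using has_sum_cmult_right[OF gb, of "f x"] by simp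
    show "((\<lambda>x. f x * b) has_sum a * b) A" by (rule has_sum_cmult_left[OF fa])
    show "(\<lambda>(x, y). f x * g y) summable_on Sigma A (\<lambda>_. B)"
      using abs_summable_summable[OF abs] by simp
  qed
qed

lemma powr_summable_UNIV:
  assumes "\<sigma> > 1"
  shows "(\<lambda>n::nat. real n powr (-\<sigma>)) summable_on UNIV"
proof -
  have "summable (\<lambda>n::nat. real n powr (-\<sigma>))"
    using assms by (subst summable_real_powr_iff) simp
  then show ?thesis
    by (subst summable_on_UNIV_nonneg_real_iff) auto
qed

lemma zeta_has_sum:
  assumes w: "Re w > 1"
  shows "((\<lambda>m::nat. 1 / of_nat m powr w) has_sum riemann_zeta w) {1..}"
    and "(\<lambda>m::nat. norm (1 / of_nat m powr w)) summable_on {1..}"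
proof -
  have nrm: "norm (1 / of_nat m powr w) = real m powr (- Re w)" for m :: nat
    by (simp add: norm_divide norm_cpowr powr_minus_divide)
  have s0: "summable (\<lambda>n::nat. real n powr (-Re w))"
    using w by (subst summable_real_powr_iff) simp
  have "summable (\<lambda>n. norm (1 / of_nat (Suc n) powr w))"
    unfolding nrm using s0 by (subst summable_Suc_iff)
  moreover have "summable (\<lambda>n. 1 / of_nat (Suc n) powr w)"
    by (rule summable_norm_cancel[OF calculation])
  ultimately have h: "((\<lambda>n. 1 / of_nat (Suc n) powr w) has_sum riemann_zeta w) UNIV"
    unfolding riemann_zeta_def by (intro norm_summable_imp_has_sum summable_sums)
  show "((\<lambda>m::nat. 1 / of_nat m powr w) has_sum riemann_zeta w) {1..}"
  proof -
    have "((\<lambda>n. 1 / of_nat (Suc n) powr w) has_sum riemann_zeta w) UNIV = ((\<lambda>m::nat. 1 / of_nat m powr w) has_sum riemann_zeta w) {1..}"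
      by (rule has_sum_reindex_bij_witness[where j=Suc and i="\<lambda>m. m - 1"]) auto
    with h show ?thesis by simp
  qed
  show "(\<lambda>m::nat. norm (1 / of_nat m powr w)) summable_on {1..}"
    unfolding nrm by (rule summable_on_subset_banach[OF powr_summable_UNIV]) (use w in auto)
qed

lemma prime_part:
  assumes w: "Re w > 1"
  shows "((\<lambda>(p,k). (1 / of_nat p :: complex) * (1 / of_nat p powr w)^k) has_sum F_prime w) ({p::nat. prime p} \<times> {1..})"
    and "(\<lambda>z. norm ((\<lambda>(p,k). (1 / of_nat p :: complex) * (1 / of_nat p powr w)^k) z)) summable_on ({p::nat. prime p} \<times> {1..})"
proof -
  define \<sigma> where "\<sigma> = Re w"
  define P where "P = {p::nat. prime p}"
  define a where "a = (\<lambda>(p,k). (1 / of_nat p :: complex) * (1 / of_nat p powr w)^k)"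
  have key: "norm (1 / of_nat p powr w) = real p powr -\<sigma>" for p :: nat
    by (simp add: norm_divide norm_cpowr powr_minus_divide \<sigma>_def)
  have small: "real p powr -\<sigma> \<le> 1/2" "real p powr -\<sigma> \<ge> 0" if "prime p" for p
  proof -
    have p2: "real p \<ge> 2" using prime_ge_2_nat[OF that] by simp
    have "real p powr 1 \<le> real p powr \<sigma>"
      by (rule powr_mono) (use p2 w \<sigma>_def in auto)
    then have "real p powr \<sigma> \<ge> 2" using p2 by simp
    then show "real p powr -\<sigma> \<le> 1/2" by (simp add: powr_minus_divide divide_le_eq)
  qed simp
  define g where "g = (\<lambda>p::nat. (1/real p) * (real p powr -\<sigma> / (1 - real p powr -\<sigma>)))"
  have norm_inner: "((\<lambda>k. norm (a (p,k))) has_sum g p) {1..}" if "prime p" for p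
  proof -
    have "((\<lambda>k. (real p powr -\<sigma>)^k) has_sum (real p powr -\<sigma> / (1 - real p powr -\<sigma>))) {1..}"
      by (rule has_sum_geometric_from_1) (use small[OF that] in auto)
    from has_sum_cmult_right[OF this, of "1/real p"]
    moreover have "1 / cmod (of_nat p powr w) = real p powr -\<sigma>"
      using key[of p] by (simp add: norm_divide)
    ultimately show ?thesis unfolding g_def a_def by (simp add: norm_mult norm_power norm_divide)
  qed
  have gbound: "g p \<le> 2 * real p powr -\<sigma>" "g p \<ge> 0" if "prime p" for p
  proof -
    define y where "y = real p powr -\<sigma>"
    have y: "0 \<le> y" "y \<le> 1/2" using small[OF that] y_def by auto
    have p1: "1/real p \<le> 1" "1/real p \<ge> 0" using prime_ge_2_nat[OF that] by auto
    have "y / (1 - y) \<le> 2 * y" using y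
      by (simp add: field_simps) (metis mult_left_le mult.commute mult_le_cancel_left1)
    moreover have "y / (1-y) \<ge> 0" using y by simp
    ultimately have "g p \<le> 1 * (2 * y)" unfolding g_def y_def[symmetric]
      using p1 by (intro mult_mono) auto
    then show "g p \<le> 2 * real p powr -\<sigma>" by (simp add: y_def)
    show "g p \<ge> 0" unfolding g_def y_def[symmetric] using y p1 by simp
  qed
  have gsum: "g summable_on P"
  proof (rule summable_on_comparison_test[where f="\<lambda>p. 2 * real p powr -\<sigma>"])
    show "(\<lambda>p. 2 * real p powr - \<sigma>) summable_on P"
      by (rule summable_on_subset_banach[OF summable_on_cmult_right[OF powr_summable_UNIV]])
         (use w \<sigma>_def in auto)
  qed (use gbound P_def in auto)
  have ns: "(\<lambda>z. norm (a z)) summable_on Sigma P (\<lambda>_. {1..})"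
    by (rule summable_on_SigmaI[where g=g]) (use norm_inner gsum P_def in auto)
  then show "(\<lambda>z. norm ((\<lambda>(p,k). (1 / of_nat p :: complex) * (1 / of_nat p powr w)^k) z)) summable_on ({p::nat. prime p} \<times> {1..})"
    unfolding a_def P_def by simp
  have asum: "a summable_on P \<times> {1..}"
    using abs_summable_summable[OF ns] by simp
  have inner: "((\<lambda>k. a (p,k)) has_sum (1 / (of_nat p powr (w + 1) - of_nat p))) {1..}" if "p \<in> P" for p
  proof -
    have pr: "prime p" using that P_def by simp
    have pos: "real p \<ge> 2" using prime_ge_2_nat[OF pr] by simp
    define x where "x = 1 / (of_nat p powr w :: complex)"
    have nx: "norm x < 1" using small[OF pr] key unfolding x_def by simp
    have "((\<lambda>k. x^k) has_sum (x / (1 - x))) {1..}" by (rule has_sum_geometric_from_1[OF nx])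
    from has_sum_cmult_right[OF this, of "1 / of_nat p"]
    have h: "((\<lambda>k. a (p,k)) has_sum (1 / of_nat p * (x / (1 - x)))) {1..}"
      unfolding a_def x_def by simp
    have Pn0: "(of_nat p powr w :: complex) \<noteq> 0" using pos by simp
    have Pn1: "(of_nat p powr w :: complex) \<noteq> 1"
    proof
      assume "(of_nat p powr w :: complex) = 1"
      then have "norm x = 1" unfolding x_def by simp
      with nx show False by simp
    qed
    have pn0: "(of_nat p :: complex) \<noteq> 0" using pos by simp
    have "1 / of_nat p * (x / (1 - x)) = 1 / (of_nat p powr (w + 1) - of_nat p)"
      unfolding x_def using Pn0 Pn1 pn0
      by (simp add: powr_add field_simps)
    with h show ?thesis by simp
  qed
  have "((\<lambda>p. 1 / (of_nat p powr (w + 1) - of_nat p)) has_sum infsum a (P \<times> {1..})) P"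
    by (rule has_sum_Sigma'[OF _ inner]) (use asum in \<open>simp add: has_sum_infsum\<close>)
  then have "F_prime w = infsum a (P \<times> {1..})"
    unfolding F_prime_def P_def by (simp add: infsumI)
  then show "((\<lambda>(p,k). (1 / of_nat p :: complex) * (1 / of_nat p powr w)^k) has_sum F_prime w) ({p::nat. prime p} \<times> {1..})"
    using asum unfolding a_def[symmetric] P_def[symmetric] by (simp add: has_sum_infsum)
qed

lemma count_lemma:
  fixes p N :: nat
  assumes p: "prime p" and N: "N > 0"
  shows "2 * card {((k,m1),m2). k \<ge> 1 \<and> m1 \<ge> 1 \<and> m2 \<ge> 1 \<and> p^k*m1*m2 = N}
         = divisor_count N * multiplicity p N"
proof -
  define D where "D = {d. d dvd N \<and> d > 0}"
  define G where "G = {((k,m1),m2). k \<ge> 1 \<and> m1 \<ge> 1 \<and> m2 \<ge> 1 \<and> p^k*m1*m2 = (N::nat)}"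
  define S where "S = Sigma D (\<lambda>d. {1..multiplicity p d})"
  have finD: "finite D" unfolding D_def using N by auto
  have pk0: "p^k > 0" for k using p prime_gt_0_nat by simp
  have nu: "\<not> is_unit p" using p not_prime_unit by blast
  have "bij_betw (\<lambda>((k,m1),m2). (p^k*m1, k)) G S"
  proof (rule bij_betwI[where g="\<lambda>(d,k). ((k, d div p^k), N div d)"])
    show "(\<lambda>((k,m1),m2). (p^k*m1, k)) \<in> G \<rightarrow> S"
    proof
      fix x assume "x \<in> G"
      then obtain k m1 m2 where x: "x = ((k,m1),m2)" "k \<ge> 1" "m1 \<ge> 1" "m2 \<ge> 1" "p^k*m1*m2 = N"
        unfolding G_def by auto
      have "p^k dvd p^k*m1" by simp
      moreover have "p^k*m1 \<noteq> 0" using pk0[of k] x(3) by simp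
      ultimately have "k \<le> multiplicity p (p^k*m1)" using power_dvd_iff_le_multiplicity nu by blast
      moreover have "p^k*m1 dvd N" using x(5) by (metis dvd_triv_left)
      moreover have "p^k*m1 > 0" using pk0 x(3) by simp
      ultimately show "(\<lambda>((k,m1),m2). (p^k*m1, k)) x \<in> S" unfolding S_def D_def using x by auto
    qed
    show "(\<lambda>(d,k). ((k, d div p^k), N div d)) \<in> S \<rightarrow> G"
    proof
      fix y assume "y \<in> S"
      then obtain d k where y: "y = (d,k)" "d dvd N" "d > 0" "1 \<le> k" "k \<le> multiplicity p d"
        unfolding S_def D_def by auto
      have dv: "p^k dvd d" using y(5) y(3) power_dvd_iff_le_multiplicity nu by blast
      have "d div p^k \<ge> 1" using dv y(3) pk0[of k]
        by (metis dvd_div_eq_0_iff less_one not_less bot_nat_0.not_eq_extremum)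
      moreover have "N div d \<ge> 1" using y(2,3) N
        by (metis dvd_div_eq_0_iff less_one not_less bot_nat_0.not_eq_extremum)
      moreover have "p^k * (d div p^k) * (N div d) = N" using dv y(2) by simp
      ultimately show "(\<lambda>(d,k). ((k, d div p^k), N div d)) y \<in> G" unfolding G_def using y by auto
    qed
    show "(\<lambda>(d,k). ((k, d div p^k), N div d)) ((\<lambda>((k,m1),m2). (p^k*m1, k)) x) = x" if "x \<in> G" for x
    proof -
      from that obtain k m1 m2 where x: "x = ((k,m1),m2)" "k \<ge> 1" "m1 \<ge> 1" "m2 \<ge> 1" "p^k*m1*m2 = N"
        unfolding G_def by auto
      have "N div (p^k*m1) = m2" using x(5) pk0[of k] x(3) by auto
      then show ?thesis using x pk0[of k] by simp
    qed
    show "(\<lambda>((k,m1),m2). (p^k*m1, k)) ((\<lambda>(d,k). ((k, d div p^k), N div d)) y) = y" if "y \<in> S" for y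
    proof -
      from that obtain d k where y: "y = (d,k)" "d dvd N" "d > 0" "1 \<le> k" "k \<le> multiplicity p d"
        unfolding S_def D_def by auto
      have dv: "p^k dvd d" using y(5) y(3) power_dvd_iff_le_multiplicity nu by blast
      then show ?thesis using y by simp
    qed
  qed
  then have "card G = card S" by (rule bij_betw_same_card)
  also have "card S = (\<Sum>d\<in>D. multiplicity p d)"
    unfolding S_def using finD by (simp add: card_SigmaI)
  finally have cG: "card G = (\<Sum>d\<in>D. multiplicity p d)" .
  have inv: "N div d \<in> D \<and> N div (N div d) = d" if "d \<in> D" for d
  proof -
    from that obtain e where e: "N = d * e" "d > 0" unfolding D_def by auto
    then have "e > 0" using N by (cases "e = 0") auto
    then show ?thesis using e N unfolding D_def by auto
  qed
  have swap: "(\<Sum>d\<in>D. multiplicity p d) = (\<Sum>d\<in>D. multiplicity p (N div d))"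
    by (rule sum.reindex_bij_witness[where i="\<lambda>d. N div d" and j="\<lambda>d. N div d"])
       (use inv in auto)
  have add: "multiplicity p d + multiplicity p (N div d) = multiplicity p N" if "d \<in> D" for d
  proof -
    from that have d: "d dvd N" "d > 0" unfolding D_def by auto
    have nz: "N div d \<noteq> 0" using d N by (simp add: dvd_div_eq_0_iff)
    have "multiplicity p (d * (N div d)) = multiplicity p d + multiplicity p (N div d)"
      by (rule prime_elem_multiplicity_mult_distrib) (use p d nz in auto)
    then show ?thesis using d by simp
  qed
  have "2 * card G = (\<Sum>d\<in>D. multiplicity p d) + (\<Sum>d\<in>D. multiplicity p (N div d))"
    using cG swap by simp
  also have "\<dots> = (\<Sum>d\<in>D. multiplicity p N)" by (simp add: sum.distrib[symmetric] add)
  also have "\<dots> = divisor_count N * multiplicity p N" by (simp add: divisor_count_def D_def)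
  finally show ?thesis unfolding G_def .
qed

lemma fiber_bounds:
  fixes p k m1 m2 N :: nat
  assumes "p^k*m1*m2 = N" "N > 0" "prime p"
  shows "p \<le> N \<or> k = 0" "k \<le> N" "m1 \<le> N" "m2 \<le> N"
proof -
  have p2: "p \<ge> 2" using assms(3) prime_ge_2_nat by simp
  have d1: "p^k dvd N" "m1 dvd N" "m2 dvd N" using assms(1) by (auto intro: dvdI simp: mult.assoc mult.left_commute)
  have pkN: "p^k \<le> N" using dvd_imp_le[OF d1(1) assms(2)] .
  show "m1 \<le> N" "m2 \<le> N" using dvd_imp_le[OF d1(2) assms(2)] dvd_imp_le[OF d1(3) assms(2)] by auto
  have "k < 2^k" by simp
  also have "2^k \<le> p^k" using p2 by (simp add: power_mono)
  finally show "k \<le> N" using pkN by simp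
  show "p \<le> N \<or> k = 0"
  proof (cases k)
    case (Suc j)
    have "p \<le> p^k" using Suc p2 by simp
    then show ?thesis using pkN by simp
  qed simp
qed

lemma fiber_value:
  fixes N :: nat and w :: complex
  assumes N: "N > 0"
  defines "fib \<equiv> {(((p,k),m1),m2). prime p \<and> k \<ge> 1 \<and> m1 \<ge> 1 \<and> m2 \<ge> 1 \<and> p^k*m1*m2 = N}"
  shows "finite fib"
    and "2 * (\<Sum>t\<in>fib. (case t of (((p,k),m1),m2) \<Rightarrow> (1/of_nat p) * (1 / of_nat (p^k*m1*m2) powr w)))
         = of_nat (divisor_count N * arith_deriv N) / of_nat N powr (w+1)"
proof -
  define G where "G = (\<lambda>p. {((k,m1),m2). k \<ge> 1 \<and> m1 \<ge> 1 \<and> m2 \<ge> 1 \<and> p^k*m1*m2 = (N::nat)})"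
  define \<iota> where "\<iota> = (\<lambda>(p::nat,((k::nat,m1::nat),m2::nat)). (((p,k),m1),m2))"
  have finG: "finite (G p)" if "prime p" for p
  proof (rule finite_subset)
    show "G p \<subseteq> ({..N} \<times> {..N}) \<times> {..N}"
    proof
      fix x assume "x \<in> G p"
      then obtain k m1 m2 where x: "x = ((k,m1),m2)" "p^k*m1*m2 = N" unfolding G_def by auto
      show "x \<in> ({..N} \<times> {..N}) \<times> {..N}" using fiber_bounds[OF x(2) N that] x(1) by auto
    qed
  qed auto
  have fibeq: "fib = \<iota> ` Sigma (prime_factors N) G"
  proof (rule set_eqI)
    fix t :: "((nat \<times> nat) \<times> nat) \<times> nat"
    obtain p k m1 m2 where t: "t = (((p,k),m1),m2)" by (metis prod.collapse)
    have "p dvd N" if "k \<ge> 1" "p^k*m1*m2 = N"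
    proof -
      have "p dvd p^k" using that(1) by (simp add: dvd_power)
      then show ?thesis using that(2) by (metis dvd_mult2)
    qed
    then show "t \<in> fib \<longleftrightarrow> t \<in> \<iota> ` Sigma (prime_factors N) G"
      unfolding t fib_def G_def \<iota>_def using N
      by (auto simp: in_prime_factors_iff image_iff)
  qed
  have inj: "inj_on \<iota> (Sigma (prime_factors N) G)"
    unfolding \<iota>_def by (rule inj_onI) auto
  have finS: "finite (Sigma (prime_factors N) G)"
    by (rule finite_SigmaI) (auto intro: finG simp: in_prime_factors_iff)
  show "finite fib" unfolding fibeq using finS by simp
  define c where "c = 1 / (of_nat N powr w :: complex)"
  have "(\<Sum>t\<in>fib. (case t of (((p,k),m1),m2) \<Rightarrow> (1/of_nat p) * (1 / of_nat (p^k*m1*m2) powr w)))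
      = (\<Sum>t\<in>fib. (case t of (((p,k),m1),m2) \<Rightarrow> 1/(of_nat p :: complex)) * c)"
    by (rule sum.cong) (auto simp: fib_def c_def)
  also have "\<dots> = (\<Sum>t\<in>fib. (case t of (((p,k),m1),m2) \<Rightarrow> 1/(of_nat p :: complex))) * c"
    by (simp add: sum_distrib_right)
  also have "(\<Sum>t\<in>fib. (case t of (((p,k),m1),m2) \<Rightarrow> 1/(of_nat p :: complex)))
      = (\<Sum>z\<in>Sigma (prime_factors N) G. (case z of (p, x) \<Rightarrow> 1/(of_nat p :: complex)))"
    unfolding fibeq by (subst sum.reindex[OF inj]) (auto simp: \<iota>_def intro!: sum.cong)
  also have "\<dots> = (\<Sum>p\<in>prime_factors N. \<Sum>x\<in>G p. 1/(of_nat p :: complex))"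
    by (subst sum.Sigma) (auto intro: finG simp: in_prime_factors_iff)
  also have "\<dots> = (\<Sum>p\<in>prime_factors N. of_nat (card (G p)) / of_nat p)"
    by simp
  finally have eq1: "(\<Sum>t\<in>fib. (case t of (((p,k),m1),m2) \<Rightarrow> (1/of_nat p) * (1 / of_nat (p^k*m1*m2) powr w)))
      = (\<Sum>p\<in>prime_factors N. of_nat (card (G p)) / of_nat p) * c" .
  have "2 * (\<Sum>p\<in>prime_factors N. of_nat (card (G p)) / (of_nat p :: complex))
      = (\<Sum>p\<in>prime_factors N. of_nat (2 * card (G p)) / of_nat p)"
    by (simp add: sum_distrib_left)
  also have "\<dots> = (\<Sum>p\<in>prime_factors N. of_nat (divisor_count N * multiplicity p N) / of_nat p)"
  proof (rule sum.cong)
    fix p assume "p \<in> prime_factors N"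
    then have "prime p" by (simp add: in_prime_factors_iff)
    from count_lemma[OF this N] show "of_nat (2 * card (G p)) / (of_nat p :: complex) = of_nat (divisor_count N * multiplicity p N) / of_nat p"
      unfolding G_def by simp
  qed simp
  finally have eq2: "2 * (\<Sum>p\<in>prime_factors N. of_nat (card (G p)) / (of_nat p :: complex))
      = (\<Sum>p\<in>prime_factors N. of_nat (divisor_count N * multiplicity p N) / of_nat p)" .
  have Nn0: "(of_nat N :: complex) \<noteq> 0" using N by simp
  have Npw: "(of_nat N :: complex) powr (w+1) = of_nat N * of_nat N powr w"
    using Nn0 by (simp add: powr_add)
  have Pn0: "(of_nat N :: complex) powr w \<noteq> 0" using Nn0 by simp
  have delta: "(of_nat (arith_deriv N) :: complex) = (\<Sum>p\<in>prime_factors N. of_nat (multiplicity p N) * (of_nat N / of_nat p))"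
    unfolding arith_deriv_def of_nat_sum
    by (rule sum.cong) (auto simp: in_prime_factors_iff of_nat_div)
  have "of_nat (divisor_count N * arith_deriv N) / (of_nat N powr (w+1) :: complex)
      = (\<Sum>p\<in>prime_factors N. of_nat (divisor_count N * multiplicity p N) / of_nat p) * c"
    unfolding of_nat_mult[of "divisor_count N"] delta Npw c_def sum_distrib_left sum_distrib_right sum_divide_distrib
    by (rule sum.cong) (use Nn0 Pn0 in \<open>auto simp: field_simps\<close>)
  then show "2 * (\<Sum>t\<in>fib. (case t of (((p,k),m1),m2) \<Rightarrow> (1/of_nat p) * (1 / of_nat (p^k*m1*m2) powr w)))
         = of_nat (divisor_count N * arith_deriv N) / of_nat N powr (w+1)"
    unfolding eq1 using eq2 by (simp add: mult.assoc)
qed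

theorem mainTheorem18:
  fixes s :: complex
  assumes "Re s > 2"
  shows "(\<lambda>n. of_nat (divisor_count (Suc n) * arith_deriv (Suc n)) / of_nat (Suc n) powr s)
           sums (2 * riemann_zeta (s - 1) ^ 2 * F_prime (s - 1))"
proof -
  define w where "w = s - 1"
  have w: "Re w > 1" using assms by (simp add: w_def)
  have sw: "s = w + 1" by (simp add: w_def)
  define P where "P = {p::nat. prime p}"
  define a where "a = (\<lambda>(p,k). (1 / of_nat p :: complex) * (1 / of_nat p powr w)^k)"
  define b where "b = (\<lambda>m::nat. 1 / of_nat m powr w :: complex)"
  have a1: "(a has_sum F_prime w) (P \<times> {1..})" and a2: "(\<lambda>z. norm (a z)) summable_on (P \<times> {1..})"
    using prime_part[OF w] unfolding a_def P_def by auto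
  have b1: "(b has_sum riemann_zeta w) {1..}" and b2: "(\<lambda>z. norm (b z)) summable_on {1..}"
    using zeta_has_sum[OF w] unfolding b_def by auto
  define H1 where "H1 = (\<lambda>(x,y). a x * b y)"
  have h1: "(H1 has_sum F_prime w * riemann_zeta w) ((P \<times> {1..}) \<times> {1..})"
    and h1': "(\<lambda>z. norm (H1 z)) summable_on ((P \<times> {1..}) \<times> {1..})"
    using has_sum_product_abs[OF a1 b1 a2 b2] unfolding H1_def by auto
  define H2 where "H2 = (\<lambda>(x,y). H1 x * b y)"
  define L where "L = F_prime w * riemann_zeta w * riemann_zeta w"
  define \<Omega> where "\<Omega> = ((P \<times> ({1..}::nat set)) \<times> ({1..}::nat set)) \<times> ({1..} :: nat set)"
  have h2: "(H2 has_sum L) \<Omega>"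
    using has_sum_product_abs(1)[OF h1 b1 h1' b2] unfolding H2_def L_def \<Omega>_def by auto
  define h where "h = (\<lambda>t. case t of (((p,k),m1),m2) \<Rightarrow> (1/of_nat p) * (1 / of_nat (p^k*m1*m2) powr w :: complex))"
  have Hh: "H2 t = h t" for t
  proof -
    obtain p k m1 m2 where t: "t = (((p,k),m1),m2)" by (metis prod.collapse)
    show ?thesis unfolding t H2_def H1_def a_def b_def h_def
      by (simp add: cpowr_mult power_one_over cpowr_pow del: of_nat_mult of_nat_power)
  qed
  define fib where "fib = (\<lambda>N. {(((p,k),m1),m2). prime p \<and> k \<ge> 1 \<and> m1 \<ge> 1 \<and> m2 \<ge> 1 \<and> p^k*m1*m2 = (N::nat)})"
  define \<phi> where "\<phi> = (\<lambda>t::((nat\<times>nat)\<times>nat)\<times>nat. case t of (((p,k),m1),m2) \<Rightarrow> p^k*m1*m2)"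
  have bij: "bij_betw (\<lambda>t. (\<phi> t, t)) \<Omega> (Sigma {1..} fib)"
    by (rule bij_betwI[where g=snd]) (auto simp: \<Omega>_def fib_def \<phi>_def P_def prime_gt_0_nat Suc_le_eq)
  have "(h has_sum L) \<Omega>" using h2 Hh by (simp add: fun_eq_iff[symmetric] Hh[abs_def])
  then have "((\<lambda>(N,t). h t) has_sum L) (Sigma {1..} fib)"
    using has_sum_reindex_bij_betw[OF bij, of "\<lambda>(N,t). h t"] by simp
  then have g: "((\<lambda>N. sum h (fib N)) has_sum L) {1..}"
  proof (rule has_sum_Sigma')
    fix N :: nat assume "N \<in> {1..}"
    then have "N > 0" by simp
    then have "finite (fib N)" unfolding fib_def by (rule fiber_value(1))
    then show "((\<lambda>t. (\<lambda>(N,t). h t) (N, t)) has_sum sum h (fib N)) (fib N)" by simp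
  qed
  then have "((\<lambda>N. 2 * sum h (fib N)) has_sum 2 * L) {1..}"
    by (rule has_sum_cmult_right)
  also have "?this \<longleftrightarrow> ((\<lambda>N. of_nat (divisor_count N * arith_deriv N) / of_nat N powr s) has_sum 2 * L) {1..}"
  proof (rule has_sum_cong)
    fix N :: nat assume "N \<in> {1..}"
    then have "N > 0" by simp
    from fiber_value(2)[OF this, of w]
    show "2 * sum h (fib N) = of_nat (divisor_count N * arith_deriv N) / of_nat N powr s"
      unfolding sw fib_def h_def by simp
  qed
  finally have fin: "((\<lambda>N. of_nat (divisor_count N * arith_deriv N) / of_nat N powr s) has_sum 2 * L) {1..}" .
  have "((\<lambda>n. of_nat (divisor_count (Suc n) * arith_deriv (Suc n)) / of_nat (Suc n) powr s) has_sum 2 * L) UNIV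
       = ((\<lambda>N. of_nat (divisor_count N * arith_deriv N) / of_nat N powr s) has_sum 2 * L) {1..}"
    by (rule has_sum_reindex_bij_witness[where j=Suc and i="\<lambda>m. m - 1"]) auto
  with fin have "(\<lambda>n. of_nat (divisor_count (Suc n) * arith_deriv (Suc n)) / of_nat (Suc n) powr s) sums (2 * L)"
    by (simp add: has_sum_imp_sums)
  moreover have "2 * L = 2 * riemann_zeta (s - 1) ^ 2 * F_prime (s - 1)"
    unfolding L_def w_def by (simp add: power2_eq_square)
  ultimately show ?thesis by simp
qed

end
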